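(* Let $u$ be a (sufficiently smooth and decaying) solution of $i\phi\partial_tu-Hu=0$, let $L=\frac14\mathcal R_h+m^2-\Delta_h$, let $\psi$ be a real-valued function of the space variable, and set $$\Theta(t)=\langle\psi\,\phi\partial_tu,\phi\partial_tu\rangle_h+\mathrm{Re}\,\langle(2\psi L-L\psi)u,u\rangle_h .$$ Then $$\phi\partial_t\Theta=\mathrm{Re}\,\langle[L,\psi]u,\phi\partial_tu\rangle_h,\qquad(\phi\partial_t)^2\Theta=-\tfrac12\langle[L,[L,\psi]]u,u\rangle_h .$$
   Context: Setting: $h$ a Riemannian metric on a 3-dimensional domain $D(h)$, $\phi(t)>0$, space-time metric $g_{00}=\phi^{-2}$, $g_{0i}=0$, $g_{ij}=-h_{ij}$, assumed complete. $\langle f,g\rangle_h=\int_{D(h)}\bar f g\sqrt{\det h}\,dx$. $\Delta_h$ is the Laplace–Beltrami operator, $\mathcal R_h$ the scalar curvature of $h$; $\psi$ and $L\psi$ etc. denote compositions of operators (multiplication by $\psi$). $H=-\gamma^0(i\gamma^af_a^jD_j+m)$, $m\ge0$, where $\gamma^0=\mathrm{diag}(1,1,-1,-1)$, $\gamma^k=\gamma^0\begin{pmatrix}0&\sigma_k\\ \sigma_k&0\end{pmatrix}$ ($\sigma_k$ Pauli), $\gamma_a=\eta_{ab}\gamma^b$ with $\eta=\mathrm{diag}(1,-1,-1,-1)$, $f_a^i$ a dreibein ($h^{ij}=\sum_af_a^if_a^j$), $D_j=\partial_j+\frac18\alpha_j^{ab}[\gamma_a,\gamma_b]$ with $\alpha_i^{ab}=f^a_j\partial_if^{jb}+f^a_j\Lambda^j_{ik}f^{kb}$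 and $\Lambda$ the Christoffel symbols of $h$. One has $H^2=L$, and $L$ is self-adjoint for $\langle\cdot,\cdot\rangle_h$. *)

theory Defs
  imports "HOL-Analysis.Analysis"
begin

text \<open>Spinor fields on the spatial domain: functions from R^3 (coordinates) to C^4.
  Only values on the domain D matter; operators are required to be local on D.\<close>

type_synonym sfield = "real^3 \<Rightarrow> complex^4"

definition cscale :: "complex \<Rightarrow> complex^4 \<Rightarrow> complex^4" where
  "cscale c w = (\<chi> k. c * w $ k)"

definition fadd :: "sfield \<Rightarrow> sfield \<Rightarrow> sfield" where
  "fadd f g = (\<lambda>x. f x + g x)"

definition fsmul :: "complex \<Rightarrow> sfield \<Rightarrow> sfield" where
  "fsmul c f = (\<lambda>x. cscale c (f x))"

definition fmul :: "(real^3 \<Rightarrow> real) \<Rightarrow> sfield \<Rightarrow> sfield" where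
  "fmul \<psi> f = (\<lambda>x. cscale (complex_of_real (\<psi> x)) (f x))"

definition comm :: "(sfield \<Rightarrow> sfield) \<Rightarrow> (sfield \<Rightarrow> sfield) \<Rightarrow> sfield \<Rightarrow> sfield" where
  "comm A B f = fadd (A (B f)) (fsmul (-1) (B (A f)))"

definition hinner :: "(real^3) set \<Rightarrow> (real^3 \<Rightarrow> real^3^3) \<Rightarrow> sfield \<Rightarrow> sfield \<Rightarrow> complex" where
  "hinner D h f g =
     (LINT x:D|lborel. (\<Sum>k\<in>UNIV. cnj (f x $ k) * g x $ k) * complex_of_real (sqrt (det (h x))))"

definition wL2 :: "(real^3) set \<Rightarrow> (real^3 \<Rightarrow> real^3^3) \<Rightarrow> sfield \<Rightarrow> bool" where
  "wL2 D h f \<longleftrightarrow> set_borel_measurable lborel D f \<and>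
     set_integrable lborel D (\<lambda>x. (norm (f x))\<^sup>2 * sqrt (det (h x)))"

definition tderiv_on :: "(real^3) set \<Rightarrow> (real \<Rightarrow> sfield) \<Rightarrow> (real \<Rightarrow> sfield) \<Rightarrow> bool" where
  "tderiv_on D a a' \<longleftrightarrow> (\<forall>t. \<forall>x\<in>D. ((\<lambda>s. a s x) has_vector_derivative a' t x) (at t))"

text \<open>A "sufficiently smooth and decaying" curve of fields: pointwise time-differentiable
  on D, measurable, and locally uniformly in time dominated (together with its time
  derivative) by a fixed weighted-square-integrable function.\<close>
definition decay_curve :: "(real^3) set \<Rightarrow> (real^3 \<Rightarrow> real^3^3) \<Rightarrow> (real \<Rightarrow> sfield) \<Rightarrow> (real \<Rightarrow> sfield) \<Rightarrow> bool" where
  "decay_curve D h a a' \<longleftrightarrow> tderiv_on D a a' \<and>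
     (\<forall>t. set_borel_measurable lborel D (a t) \<and> set_borel_measurable lborel D (a' t)) \<and>
     (\<forall>T>0. \<exists>G. set_borel_measurable lborel D G \<and>
        set_integrable lborel D (\<lambda>x. (G x)\<^sup>2 * sqrt (det (h x))) \<and>
        (\<forall>t\<in>{-T..T}. \<forall>x\<in>D. norm (a t x) \<le> G x \<and> norm (a' t x) \<le> G x))"

definition local_on :: "(real^3) set \<Rightarrow> (sfield \<Rightarrow> sfield) \<Rightarrow> bool" where
  "local_on D A \<longleftrightarrow> (\<forall>f g. (\<forall>x\<in>D. f x = g x) \<longrightarrow> (\<forall>x\<in>D. A f x = A g x))"

end

theory Submission
  imports Defs
begin

lemma lip_bound:
  fixes f f' :: "real \<Rightarrow> real"
  assumes der: "\<And>s. (f has_field_derivative f' s) (at s)"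
    and bnd: "\<And>s. s \<in> {t-1..t+1} \<Longrightarrow> \<bar>f' s\<bar> \<le> G"
    and s: "s \<in> {t-1..t+1}"
  shows "\<bar>f s - f t\<bar> \<le> G * \<bar>s - t\<bar>"
proof (cases "s < t")
  case True
  then obtain z where z: "s < z" "z < t" "f t - f s = (t - s) * f' z"
    using MVT2[of s t f f'] der by blast
  have "z \<in> {t-1..t+1}" using z s by auto
  hence "\<bar>f' z\<bar> \<le> G" by (rule bnd)
  moreover have "\<bar>f s - f t\<bar> = \<bar>f' z\<bar> * (t - s)"
  proof -
    have "\<bar>f s - f t\<bar> = \<bar>f t - f s\<bar>" by (rule abs_minus_commute)
    also have "\<dots> = \<bar>f' z\<bar> * (t - s)" using z by (simp add: abs_mult)
    finally show ?thesis .
  qed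
  ultimately show ?thesis using True by (simp add: mult_right_mono)
next
  case False
  show ?thesis
  proof (cases "s = t")
    case True thus ?thesis by simp
  next
    case False
    with \<open>\<not> s < t\<close> have "t < s" by simp
    then obtain z where z: "t < z" "z < s" "f s - f t = (s - t) * f' z"
      using MVT2[of t s f f'] der by blast
    have "z \<in> {t-1..t+1}" using z s by auto
    hence "\<bar>f' z\<bar> \<le> G" by (rule bnd)
    moreover have "\<bar>f s - f t\<bar> = \<bar>f' z\<bar> * (s - t)" using z by (simp add: abs_mult)
    ultimately show ?thesis using \<open>t < s\<close> by (simp add: mult_right_mono)
  qed
qed

lemma deriv_lint_real:
  fixes f f' :: "real \<Rightarrow> 'a \<Rightarrow> real"
  assumes fi: "\<And>s. integrable M (f s)" and f'i: "integrable M (f' t)"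
  and der: "\<And>s x. x \<in> space M \<Longrightarrow> ((\<lambda>s. f s x) has_field_derivative f' s x) (at s)"
  and gi: "integrable M g" and bnd: "\<And>s x. s \<in> {t-1..t+1} \<Longrightarrow> x \<in> space M \<Longrightarrow> \<bar>f' s x\<bar> \<le> g x"
  shows "((\<lambda>s. LINT x|M. f s x) has_field_derivative (LINT x|M. f' t x)) (at t)"
  unfolding has_field_derivative_iff tendsto_at_iff_sequentially
proof (intro allI impI)
  fix X :: "nat \<Rightarrow> real" assume X: "\<forall>i. X i \<in> UNIV - {t}" "X \<longlonglongrightarrow> t"
  obtain N where N: "\<And>n. n \<ge> N \<Longrightarrow> dist (X n) t < 1" using metric_LIMSEQ_D[OF X(2), of 1] by auto
  define Q where "Q n x = (f (X (n+N)) x - f t x) / (X (n+N) - t)" for n x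
  have XN: "X (n+N) \<in> {t-1..t+1}" for n using N[of "n+N"] by (auto simp: dist_real_def)
  have XNt: "X (n+N) \<noteq> t" for n using X(1) by auto
  have lim: "(\<lambda>n. LINT x|M. Q n x) \<longlonglongrightarrow> (LINT x|M. f' t x)"
  proof (rule integral_dominated_convergence[where w=g])
    show "f' t \<in> borel_measurable M" using f'i by auto
    show "(\<lambda>x. Q n x) \<in> borel_measurable M" for n
      unfolding Q_def using fi by (intro borel_measurable_divide borel_measurable_diff) auto
    show "integrable M g" by fact
    show "AE x in M. (\<lambda>n. Q n x) \<longlonglongrightarrow> f' t x"
    proof (rule AE_I2)
      fix x assume x: "x \<in> space M"
      have "((\<lambda>y. (f y x - f t x) / (y - t)) \<longlongrightarrow> f' t x) (at t)"
        using der[OF x] unfolding has_field_derivative_iff by simp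
      hence H: "\<forall>X. (\<forall>i. X i \<in> UNIV - {t}) \<longrightarrow> X \<longlonglongrightarrow> t \<longrightarrow> (\<lambda>n. (f (X n) x - f t x) / (X n - t)) \<longlonglongrightarrow> f' t x"
        unfolding tendsto_at_iff_sequentially comp_def by blast
      have "\<forall>i. X (i+N) \<in> UNIV - {t}" "(\<lambda>i. X (i+N)) \<longlonglongrightarrow> t"
        using X by (auto intro: LIMSEQ_ignore_initial_segment)
      thus "(\<lambda>n. Q n x) \<longlonglongrightarrow> f' t x"
        unfolding Q_def using H[rule_format, of "\<lambda>i. X (i+N)"] by simp
    qed
    show "AE x in M. norm (Q n x) \<le> g x" for n
    proof (rule AE_I2)
      fix x assume x: "x \<in> space M"
      have "\<bar>f (X (n+N)) x - f t x\<bar> \<le> g x * \<bar>X (n+N) - t\<bar>"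
        by (rule lip_bound[OF der[OF x] bnd[OF _ x] XN])
      moreover have "\<bar>X (n+N) - t\<bar> > 0" using XNt by simp
      ultimately show "norm (Q n x) \<le> g x"
        unfolding Q_def by (simp add: abs_divide divide_le_eq)
    qed
  qed
  have eq: "(LINT x|M. Q n x) = ((LINT x|M. f (X (n+N)) x) - (LINT x|M. f t x)) / (X (n+N) - t)" for n
    unfolding Q_def using fi by (simp add: integral_diff)
  show "((\<lambda>y. ((LINT x|M. f y x) - (LINT x|M. f t x)) / (y - t)) \<circ> X) \<longlonglongrightarrow> (LINT x|M. f' t x)"
    apply (rule LIMSEQ_offset[where k=N])
    using lim unfolding eq by (simp add: comp_def)
qed


lemma meas_vec_nth: "f \<in> borel_measurable M \<Longrightarrow> (\<lambda>x. (f x::'a::real_normed_vector^'n) $ k) \<in> borel_measurable M"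
  by (erule measurable_compose, intro borel_measurable_continuous_onI continuous_intros)
lemma meas_cnj: "f \<in> borel_measurable M \<Longrightarrow> (\<lambda>x. cnj (f x)) \<in> borel_measurable M"
  by (erule measurable_compose, intro borel_measurable_continuous_onI continuous_intros)

definition ip :: "complex^4 \<Rightarrow> complex^4 \<Rightarrow> complex" where
  "ip a b = (\<Sum>k\<in>UNIV. cnj (a $ k) * b $ k)"
definition sd :: "(real^3 \<Rightarrow> real^3^3) \<Rightarrow> real^3 \<Rightarrow> real" where
  "sd h x = sqrt (det (h x))"
definition II :: "(real^3) set \<Rightarrow> (real^3 \<Rightarrow> real^3^3) \<Rightarrow> sfield \<Rightarrow> sfield \<Rightarrow> real^3 \<Rightarrow> complex" where
  "II D h f g = (\<lambda>x. indicator D x *\<^sub>R (ip (f x) (g x) * complex_of_real (sd h x)))"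
definition good :: "(real^3) set \<Rightarrow> (real^3 \<Rightarrow> real^3^3) \<Rightarrow> sfield \<Rightarrow> bool" where
  "good D h f \<longleftrightarrow> set_borel_measurable lborel D f \<and>
     (\<exists>G. set_integrable lborel D (\<lambda>x. (G x)\<^sup>2 * sd h x) \<and> (\<forall>x\<in>D. norm (f x) \<le> G x))"

lemma hinner_II: "hinner D h f g = integral\<^sup>L lborel (II D h f g)"
  by (simp add: hinner_def set_lebesgue_integral_def ip_def sd_def II_def)

lemma ip_norm: "norm (ip a b) \<le> norm a * norm b"
proof -
  have "norm (ip a b) \<le> (\<Sum>k\<in>UNIV. norm (cnj (a$k) * b$k))" unfolding ip_def by (rule norm_sum)
  also have "\<dots> = (\<Sum>k\<in>UNIV. \<bar>norm (a$k)\<bar> * \<bar>norm (b$k)\<bar>)" by (simp add: norm_mult)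
  also have "\<dots> \<le> L2_set (\<lambda>k. norm (a$k)) UNIV * L2_set (\<lambda>k. norm (b$k)) UNIV" by (rule L2_set_mult_ineq)
  also have "\<dots> = norm a * norm b" by (simp add: norm_vec_def)
  finally show ?thesis .
qed

lemma meas_ip: "f \<in> borel_measurable M \<Longrightarrow> g \<in> borel_measurable M \<Longrightarrow> (\<lambda>x. ip (f x) (g x)) \<in> borel_measurable M"
  unfolding ip_def by (intro borel_measurable_sum borel_measurable_times meas_vec_nth meas_cnj)

lemma II_meas:
  assumes "set_borel_measurable lborel D f" "set_borel_measurable lborel D g"
    "set_borel_measurable lborel D (sd h)"
  shows "II D h f g \<in> borel_measurable lborel"
proof -
  have "II D h f g = (\<lambda>x. ip (indicator D x *\<^sub>R f x) (indicator D x *\<^sub>R g x) * complex_of_real (indicator D x *\<^sub>R sd h x))"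
    by (rule ext) (simp add: II_def indicator_def ip_def)
  also have "\<dots> \<in> borel_measurable lborel"
    using assms unfolding set_borel_measurable_def
    by (intro borel_measurable_times meas_ip measurable_compose[OF _ borel_measurable_of_real])
  finally show ?thesis .
qed

lemma good_int:
  assumes f: "good D h f" and g: "good D h g" and sm: "set_borel_measurable lborel D (sd h)"
  shows "integrable lborel (II D h f g)"
proof -
  obtain G1 where G1: "set_integrable lborel D (\<lambda>x. (G1 x)\<^sup>2 * sd h x)" "\<forall>x\<in>D. norm (f x) \<le> G1 x"
    using f unfolding good_def by blast
  obtain G2 where G2: "set_integrable lborel D (\<lambda>x. (G2 x)\<^sup>2 * sd h x)" "\<forall>x\<in>D. norm (g x) \<le> G2 x"
    using g unfolding good_def by blast
  let ?F = "\<lambda>x. \<bar>indicator D x *\<^sub>R ((G1 x)\<^sup>2 * sd h x)\<bar> + \<bar>indicator D x *\<^sub>R ((G2 x)\<^sup>2 * sd h x)\<bar>"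
  show ?thesis
  proof (rule Bochner_Integration.integrable_bound[where f="?F"])
    show "integrable lborel ?F"
      using G1(1) G2(1) unfolding set_integrable_def by (intro Bochner_Integration.integrable_add Bochner_Integration.integrable_abs)
    show "II D h f g \<in> borel_measurable lborel"
      using f g sm unfolding good_def by (intro II_meas) auto
    show "AE x in lborel. norm (II D h f g x) \<le> norm (?F x)"
    proof (rule AE_I2)
      fix x
      show "norm (II D h f g x) \<le> norm (?F x)"
      proof (cases "x \<in> D")
        case False thus ?thesis by (simp add: II_def)
      next
        case True
        have a: "norm (f x) \<le> G1 x" "norm (g x) \<le> G2 x" using G1(2) G2(2) True by auto
        have "norm (ip (f x) (g x)) \<le> G1 x * G2 x"
          using ip_norm[of "f x" "g x"] a by (meson mult_mono norm_ge_zero order_trans)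
        also have "\<dots> \<le> (G1 x)\<^sup>2 + (G2 x)\<^sup>2"
        proof -
          have "0 \<le> G1 x" "0 \<le> G2 x" using a norm_ge_zero[of "f x"] norm_ge_zero[of "g x"] by linarith+
          hence "0 \<le> G1 x * G2 x" by simp
          moreover have "2 * G1 x * G2 x \<le> (G1 x)\<^sup>2 + (G2 x)\<^sup>2" by (rule sum_squares_bound)
          ultimately show ?thesis by linarith
        qed
        finally have b: "norm (ip (f x) (g x)) \<le> (G1 x)\<^sup>2 + (G2 x)\<^sup>2" .
        have "norm (II D h f g x) = norm (ip (f x) (g x)) * \<bar>sd h x\<bar>"
          using True by (simp add: II_def norm_mult)
        also have "\<dots> \<le> ((G1 x)\<^sup>2 + (G2 x)\<^sup>2) * \<bar>sd h x\<bar>"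
          using b by (simp add: mult_right_mono)
        also have "\<dots> = norm (?F x)"
          using True by (simp add: abs_mult distrib_right)
        finally show ?thesis .
      qed
    qed
  qed
qed


lemma hinner_lin3:
  assumes eq: "\<forall>x\<in>D. ip (f x) (g x) = c1 * ip (f1 x) (g1 x) + c2 * ip (f2 x) (g2 x) + c3 * ip (f3 x) (g3 x)"
    and i1: "integrable lborel (II D h f1 g1)" and i2: "integrable lborel (II D h f2 g2)"
    and i3: "integrable lborel (II D h f3 g3)"
  shows "hinner D h f g = c1 * hinner D h f1 g1 + c2 * hinner D h f2 g2 + c3 * hinner D h f3 g3"
proof -
  have "II D h f g = (\<lambda>x. c1 * II D h f1 g1 x + c2 * II D h f2 g2 x + c3 * II D h f3 g3 x)"
  proof
    fix x show "II D h f g x = c1 * II D h f1 g1 x + c2 * II D h f2 g2 x + c3 * II D h f3 g3 x"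
      using eq by (cases "x \<in> D") (auto simp: II_def algebra_simps)
  qed
  thus ?thesis unfolding hinner_II using i1 i2 i3
    by (simp add: Bochner_Integration.integral_add)
qed

lemma hinner_cnj:
  assumes eq: "\<forall>x\<in>D. ip (f x) (g x) = cnj (ip (f' x) (g' x))"
  shows "hinner D h f g = cnj (hinner D h f' g')"
proof -
  have "II D h f g = (\<lambda>x. cnj (II D h f' g' x))"
  proof
    fix x show "II D h f g x = cnj (II D h f' g' x)"
      using eq by (cases "x \<in> D") (auto simp: II_def)
  qed
  thus ?thesis unfolding hinner_II by simp
qed

lemma wL2_good: "wL2 D h f \<Longrightarrow> good D h f"
  unfolding wL2_def good_def sd_def by (intro conjI exI[of _ "\<lambda>x. norm (f x)"]) auto

lemma decay_good:
  assumes "decay_curve D h a a'"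
  shows "good D h (a s)" "good D h (a' s)"
proof -
  have "\<forall>T>0. \<exists>G. set_borel_measurable lborel D G \<and>
        set_integrable lborel D (\<lambda>x. (G x)\<^sup>2 * sqrt (det (h x))) \<and>
        (\<forall>t\<in>{-T..T}. \<forall>x\<in>D. norm (a t x) \<le> G x \<and> norm (a' t x) \<le> G x)"
    using assms unfolding decay_curve_def by blast
  moreover have "(0::real) < \<bar>s\<bar>+1" by simp
  ultimately obtain G where G: "set_integrable lborel D (\<lambda>x. (G x)\<^sup>2 * sqrt (det (h x)))"
      "\<forall>t\<in>{-(\<bar>s\<bar>+1)..\<bar>s\<bar>+1}. \<forall>x\<in>D. norm (a t x) \<le> G x \<and> norm (a' t x) \<le> G x"
    by auto
  have s: "s \<in> {-(\<bar>s\<bar>+1)..\<bar>s\<bar>+1}" by auto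
  show "good D h (a s)" "good D h (a' s)"
    using assms G s unfolding decay_curve_def good_def sd_def by (auto intro!: exI[of _ G])
qed

lemma sd_meas:
  assumes "open D" "continuous_on D h"
  shows "set_borel_measurable lborel D (sd h)"
proof -
  have "continuous_on D (\<lambda>x. det (h x))" unfolding det_def using assms(2)
    by (intro continuous_intros) auto
  hence "continuous_on D (sd h)" unfolding sd_def by (intro continuous_intros)
  hence "(\<lambda>x. indicator D x *\<^sub>R sd h x) \<in> borel_measurable borel"
    using assms(1) by (intro borel_measurable_continuous_on_indicator) auto
  thus ?thesis unfolding set_borel_measurable_def by simp
qed


lemma II_bound:
  assumes "x \<in> D \<Longrightarrow> norm (f x) \<le> G1 x" "x \<in> D \<Longrightarrow> norm (g x) \<le> G2 x"
  shows "norm (II D h f g x) \<le> \<bar>indicator D x *\<^sub>R ((G1 x)\<^sup>2 * sd h x)\<bar> + \<bar>indicator D x *\<^sub>R ((G2 x)\<^sup>2 * sd h x)\<bar>"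
proof (cases "x \<in> D")
  case False thus ?thesis by (simp add: II_def)
next
  case True
  have a: "norm (f x) \<le> G1 x" "norm (g x) \<le> G2 x" using assms True by auto
  have "norm (ip (f x) (g x)) \<le> G1 x * G2 x"
    using ip_norm[of "f x" "g x"] a by (meson mult_mono norm_ge_zero order_trans)
  also have "\<dots> \<le> (G1 x)\<^sup>2 + (G2 x)\<^sup>2"
  proof -
    have "0 \<le> G1 x" "0 \<le> G2 x" using a norm_ge_zero[of "f x"] norm_ge_zero[of "g x"] by linarith+
    hence "0 \<le> G1 x * G2 x" by simp
    moreover have "2 * G1 x * G2 x \<le> (G1 x)\<^sup>2 + (G2 x)\<^sup>2" by (rule sum_squares_bound)
    ultimately show ?thesis by linarith
  qed
  finally have b: "norm (ip (f x) (g x)) \<le> (G1 x)\<^sup>2 + (G2 x)\<^sup>2" .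
  have "norm (II D h f g x) = norm (ip (f x) (g x)) * \<bar>sd h x\<bar>"
    using True by (simp add: II_def norm_mult)
  also have "\<dots> \<le> ((G1 x)\<^sup>2 + (G2 x)\<^sup>2) * \<bar>sd h x\<bar>"
    using b by (simp add: mult_right_mono)
  also have "\<dots> = \<bar>indicator D x *\<^sub>R ((G1 x)\<^sup>2 * sd h x)\<bar> + \<bar>indicator D x *\<^sub>R ((G2 x)\<^sup>2 * sd h x)\<bar>"
    using True by (simp add: abs_mult distrib_right)
  finally show ?thesis .
qed

lemma ip_deriv:
  assumes "(A has_vector_derivative A') (at s)" "(B has_vector_derivative B') (at s)"
  shows "((\<lambda>s. ip (A s) (B s)) has_vector_derivative (ip (A s) B' + ip A' (B s))) (at s)"
proof -
  have c: "((\<lambda>s. A s $ k) has_vector_derivative A' $ k) (at s)" "((\<lambda>s. B s $ k) has_vector_derivative B' $ k) (at s)" for k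
    using bounded_linear.has_vector_derivative[OF bounded_linear_vec_nth assms(1)]
      bounded_linear.has_vector_derivative[OF bounded_linear_vec_nth assms(2)] by auto
  have "((\<lambda>s. \<Sum>k\<in>UNIV. cnj (A s $ k) * B s $ k) has_vector_derivative
      (\<Sum>k\<in>UNIV. cnj (A s $ k) * B' $ k + cnj (A' $ k) * B s $ k)) (at s)"
    by (intro has_vector_derivative_sum has_vector_derivative_mult has_vector_derivative_cnj c)
  thus ?thesis unfolding ip_def by (simp add: sum.distrib)
qed

lemma hinner_deriv_Re:
  assumes sm: "set_borel_measurable lborel D (sd h)"
  and da: "decay_curve D h a a'" and db: "decay_curve D h b b'"
  shows "((\<lambda>s. Re (hinner D h (a s) (b s))) has_real_derivative
     (Re (hinner D h (a' t) (b t)) + Re (hinner D h (a t) (b' t)))) (at t)"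
proof -
  define f where "f s x = Re (II D h (a s) (b s) x)" for s x
  define f' where "f' s x = Re (II D h (a s) (b' s) x) + Re (II D h (a' s) (b s) x)" for s x
  have int: "integrable lborel (II D h (a s) (b s))" "integrable lborel (II D h (a s) (b' s))"
    "integrable lborel (II D h (a' s) (b s))" for s
    using decay_good[OF da, of s] decay_good[OF db, of s] sm by (auto intro: good_int)
  have e1: "Re (hinner D h (a s) (b s)) = (LINT x|lborel. f s x)" for s
    unfolding hinner_II f_def using int by simp
  have e2: "Re (hinner D h (a' t) (b t)) + Re (hinner D h (a t) (b' t)) = (LINT x|lborel. f' t x)"
    unfolding hinner_II f'_def using int by (simp add: Bochner_Integration.integral_add)
  define T where "T = \<bar>t\<bar> + 1"
  have "\<forall>T>0. \<exists>G. set_borel_measurable lborel D G \<and>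
        set_integrable lborel D (\<lambda>x. (G x)\<^sup>2 * sqrt (det (h x))) \<and>
        (\<forall>t\<in>{-T..T}. \<forall>x\<in>D. norm (a t x) \<le> G x \<and> norm (a' t x) \<le> G x)"
    using da unfolding decay_curve_def by blast
  moreover have T0: "(0::real) < T" by (simp add: T_def)
  ultimately obtain Ga where Ga: "set_integrable lborel D (\<lambda>x. (Ga x)\<^sup>2 * sd h x)"
      "\<forall>t\<in>{-T..T}. \<forall>x\<in>D. norm (a t x) \<le> Ga x \<and> norm (a' t x) \<le> Ga x"
    unfolding sd_def by blast
  have "\<forall>T>0. \<exists>G. set_borel_measurable lborel D G \<and>
        set_integrable lborel D (\<lambda>x. (G x)\<^sup>2 * sqrt (det (h x))) \<and>
        (\<forall>t\<in>{-T..T}. \<forall>x\<in>D. norm (b t x) \<le> G x \<and> norm (b' t x) \<le> G x)"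
    using db unfolding decay_curve_def by blast
  with T0 obtain Gb where Gb: "set_integrable lborel D (\<lambda>x. (Gb x)\<^sup>2 * sd h x)"
      "\<forall>t\<in>{-T..T}. \<forall>x\<in>D. norm (b t x) \<le> Gb x \<and> norm (b' t x) \<le> Gb x"
    unfolding sd_def by blast
  define g where "g x = 2 * (\<bar>indicator D x *\<^sub>R ((Ga x)\<^sup>2 * sd h x)\<bar> + \<bar>indicator D x *\<^sub>R ((Gb x)\<^sup>2 * sd h x)\<bar>)" for x
  have "((\<lambda>s. LINT x|lborel. f s x) has_field_derivative (LINT x|lborel. f' t x)) (at t)"
  proof (rule deriv_lint_real[where g=g])
    show "integrable lborel (f s)" for s unfolding f_def using int by auto
    show "integrable lborel (f' t)" unfolding f'_def using int
      by (intro Bochner_Integration.integrable_add) auto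
    show "integrable lborel g" unfolding g_def using Ga(1) Gb(1) unfolding set_integrable_def
      by (intro integrable_mult_right Bochner_Integration.integrable_add Bochner_Integration.integrable_abs)
    show "\<bar>f' s x\<bar> \<le> g x" if s: "s \<in> {t-1..t+1}" for s x
    proof -
      have sT: "s \<in> {-T..T}" using s by (auto simp: T_def)
      have "\<bar>f' s x\<bar> \<le> norm (II D h (a s) (b' s) x) + norm (II D h (a' s) (b s) x)"
        unfolding f'_def by (meson abs_Re_le_cmod abs_triangle_ineq order_trans add_mono)
      also have "\<dots> \<le> g x"
        using II_bound[of x D "a s" Ga "b' s" Gb h] II_bound[of x D "a' s" Ga "b s" Gb h] Ga(2) Gb(2) sT
        unfolding g_def by auto
      finally show ?thesis .
    qed
    show "((\<lambda>s. f s x) has_field_derivative f' s x) (at s)" for s x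
    proof (cases "x \<in> D")
      case False thus ?thesis by (simp add: f_def f'_def II_def)
    next
      case True
      have "((\<lambda>s. ip (a s x) (b s x) * complex_of_real (sd h x)) has_vector_derivative
            (ip (a s x) (b' s x) + ip (a' s x) (b s x)) * complex_of_real (sd h x)) (at s)"
        using da db True unfolding decay_curve_def tderiv_on_def
        by (intro has_vector_derivative_mult_left ip_deriv) auto
      hence "((\<lambda>s. Re (ip (a s x) (b s x) * complex_of_real (sd h x))) has_field_derivative
            Re ((ip (a s x) (b' s x) + ip (a' s x) (b s x)) * complex_of_real (sd h x))) (at s)"
        unfolding has_vector_derivative_complex_iff by blast
      thus ?thesis using True by (simp add: f_def f'_def II_def algebra_simps)
    qed
  qed
  thus ?thesis unfolding e1 e2 .
qed


lemma ip_cscale_left[simp]: "ip (cscale c a) b = cnj c * ip a b"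
  by (simp add: ip_def cscale_def sum_distrib_left mult.assoc)
lemma ip_cscale_right[simp]: "ip a (cscale c b) = c * ip a b"
  by (simp add: ip_def cscale_def sum_distrib_left mult.left_commute)
lemma ip_add_left[simp]: "ip (a + b) c = ip a c + ip b c"
  by (simp add: ip_def sum.distrib distrib_right)
lemma ip_add_right[simp]: "ip a (b + c) = ip a b + ip a c"
  by (simp add: ip_def sum.distrib distrib_left)
lemma vsc: "(c *\<^sub>R (v::complex^4)) $ k = complex_of_real c * v $ k"
  unfolding vector_scaleR_component by (simp add: scaleR_conv_of_real)

lemma cnj_ip[simp]: "cnj (ip a b) = ip b a"
  by (simp add: ip_def mult.commute)

lemma ip_swap: "ip b a = cnj (ip a b)"
  by (simp add: ip_def mult.commute)

theorem proposition4p1: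
  fixes D :: "(real^3) set"
    and h :: "real^3 \<Rightarrow> real^3^3"
    and \<phi> \<phi>' :: "real \<Rightarrow> real"
    and H L :: "sfield \<Rightarrow> sfield"
    and dom :: "sfield set"
    and \<psi> :: "real^3 \<Rightarrow> real"
    and u ut utt :: "real \<Rightarrow> sfield"
  assumes D_open: "open D"
    and h_cont: "continuous_on D h"
    and h_metric: "\<forall>x\<in>D. transpose (h x) = h x \<and> (\<forall>\<xi>. \<xi> \<noteq> 0 \<longrightarrow> \<xi> \<bullet> (h x *v \<xi>) > 0)"
    and \<phi>_pos: "\<forall>t. \<phi> t > 0"
    and \<phi>_deriv: "\<forall>t. (\<phi> has_real_derivative \<phi>' t) (at t)"
    \<comment> \<open>the domain of smooth decaying fields, on which H^2 = L and L is symmetric\<close>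
    and dom_L2: "\<forall>f\<in>dom. wL2 D h f"
    and dom_add: "\<forall>f\<in>dom. \<forall>g\<in>dom. fadd f g \<in> dom"
    and dom_smul: "\<forall>c. \<forall>f\<in>dom. fsmul c f \<in> dom"
    and dom_L: "\<forall>f\<in>dom. L f \<in> dom"
    and dom_H: "\<forall>f\<in>dom. H f \<in> dom"
    and dom_\<psi>: "\<forall>f\<in>dom. fmul \<psi> f \<in> dom"
    and H_local: "local_on D H"
    and L_local: "local_on D L"
    and H_add: "\<forall>f\<in>dom. \<forall>g\<in>dom. \<forall>x\<in>D. H (fadd f g) x = fadd (H f) (H g) x"
    and H_smul: "\<forall>c. \<forall>f\<in>dom. \<forall>x\<in>D. H (fsmul c f) x = fsmul c (H f) x"
    and H_sq: "\<forall>f\<in>dom. \<forall>x\<in>D. H (H f) x = L f x"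
    and L_symm: "\<forall>f\<in>dom. \<forall>g\<in>dom. hinner D h (L f) g = hinner D h f (L g)"
    \<comment> \<open>u is a sufficiently smooth and decaying solution of  i phi d_t u - H u = 0\<close>
    and u_dom: "\<forall>t. u t \<in> dom \<and> ut t \<in> dom"
    and u_eq: "\<forall>t. \<forall>x\<in>D. cscale \<i> (\<phi> t *\<^sub>R ut t x) = H (u t) x"
    and u_dec: "decay_curve D h u ut"
    and ut_dec: "decay_curve D h ut utt"
    and \<psi>ut_dec: "decay_curve D h (\<lambda>t. fmul \<psi> (ut t)) (\<lambda>t. fmul \<psi> (utt t))"
    and \<psi>Lu_dec: "decay_curve D h (\<lambda>t. fmul \<psi> (L (u t))) (\<lambda>t. fmul \<psi> (L (ut t)))"
    and L\<psi>u_dec: "decay_curve D h (\<lambda>t. L (fmul \<psi> (u t))) (\<lambda>t. L (fmul \<psi> (ut t)))"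
    and Hu_deriv: "tderiv_on D (\<lambda>t. H (u t)) (\<lambda>t. H (ut t))"
  defines "\<Theta> \<equiv> \<lambda>t.
      Re (hinner D h (fmul \<psi> (fsmul (complex_of_real (\<phi> t)) (ut t))) (fsmul (complex_of_real (\<phi> t)) (ut t)))
    + Re (hinner D h (fadd (fsmul 2 (fmul \<psi> (L (u t)))) (fsmul (-1) (L (fmul \<psi> (u t))))) (u t))"
  shows "(\<forall>t. \<exists>d. (\<Theta> has_real_derivative d) (at t) \<and>
           \<phi> t * d = Re (hinner D h (comm L (fmul \<psi>) (u t)) (fsmul (complex_of_real (\<phi> t)) (ut t))))
       \<and> (\<forall>t. \<exists>d. ((\<lambda>s. \<phi> s * deriv \<Theta> s) has_real_derivative d) (at t) \<and>
           complex_of_real (\<phi> t * d) = - (1/2) * hinner D h (comm L (comm L (fmul \<psi>)) (u t)) (u t))"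
proof -
  have sm: "set_borel_measurable lborel D (sd h)" by (rule sd_meas[OF D_open h_cont])
  have gd: "good D h f" if "f \<in> dom" for f using dom_L2 that by (auto intro: wL2_good)
  have int: "integrable lborel (II D h f g)" if "f \<in> dom" "g \<in> dom" for f g
    using good_int[OF gd[OF that(1)] gd[OF that(2)] sm] .
  have uD: "u t \<in> dom" "ut t \<in> dom" for t using u_dom by auto
  have psiD: "fmul \<psi> f \<in> dom" if "f \<in> dom" for f using dom_\<psi> that by auto
  have LD: "L f \<in> dom" if "f \<in> dom" for f using dom_L that by auto
  have \<phi>ne: "\<phi> t \<noteq> 0" for t using \<phi>_pos by (metis less_irrefl)
  have Lrel: "L (u t) x = cscale (- complex_of_real ((\<phi> t)\<^sup>2)) (utt t x) + cscale (- complex_of_real (\<phi> t * \<phi>' t)) (ut t x)"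
    if x: "x \<in> D" for t x
  proof -
    have Hut: "H (ut t) x = cscale \<i> (cscale (complex_of_real (\<phi> t)) (utt t x) + cscale (complex_of_real (\<phi>' t)) (ut t x))"
    proof (rule vec_eq_iff[THEN iffD2], rule allI)
      fix k
      have e: "(\<lambda>s. H (u s) x $ k) = (\<lambda>s. \<i> * (complex_of_real (\<phi> s) * ut s x $ k))"
      proof
        fix s
        have "H (u s) x = cscale \<i> (\<phi> s *\<^sub>R ut s x)" using u_eq x by auto
        thus "H (u s) x $ k = \<i> * (complex_of_real (\<phi> s) * ut s x $ k)"
          by (simp add: cscale_def) (simp add: scaleR_conv_of_real)
      qed
      have d1: "((\<lambda>s. H (u s) x $ k) has_vector_derivative H (ut t) x $ k) (at t)"
        using Hu_deriv x unfolding tderiv_on_def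
        by (intro bounded_linear.has_vector_derivative[OF bounded_linear_vec_nth]) auto
      have dut: "((\<lambda>s. ut s x) has_vector_derivative utt t x) (at t)"
        using ut_dec x unfolding decay_curve_def tderiv_on_def by auto
      have d2: "((\<lambda>s. \<i> * (complex_of_real (\<phi> s) * ut s x $ k)) has_vector_derivative
          \<i> * (complex_of_real (\<phi> t) * utt t x $ k + complex_of_real (\<phi>' t) * ut t x $ k)) (at t)"
        by (intro has_vector_derivative_mult_right has_vector_derivative_mult has_vector_derivative_of_real
            \<phi>_deriv[rule_format] bounded_linear.has_vector_derivative[OF bounded_linear_vec_nth dut])
      show "H (ut t) x $ k = cscale \<i> (cscale (complex_of_real (\<phi> t)) (utt t x) + cscale (complex_of_real (\<phi>' t)) (ut t x)) $ k"
        using vector_derivative_unique_at[OF d1[unfolded e] d2] by (simp add: cscale_def)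
    qed
    have agree: "\<forall>y\<in>D. H (u t) y = fsmul (\<i> * complex_of_real (\<phi> t)) (ut t) y"
    proof
      fix y assume y: "y \<in> D"
      have "H (u t) y = cscale \<i> (\<phi> t *\<^sub>R ut t y)" using u_eq y by auto
      thus "H (u t) y = fsmul (\<i> * complex_of_real (\<phi> t)) (ut t) y"
        by (simp add: cscale_def fsmul_def vec_eq_iff) (simp add: scaleR_conv_of_real)
    qed
    have "L (u t) x = H (H (u t)) x" using H_sq uD x by auto
    also have "\<dots> = H (fsmul (\<i> * complex_of_real (\<phi> t)) (ut t)) x"
      using H_local agree x unfolding local_on_def by blast
    also have "\<dots> = fsmul (\<i> * complex_of_real (\<phi> t)) (H (ut t)) x"
      using H_smul uD x by blast
    also have "\<dots> = cscale (- complex_of_real ((\<phi> t)\<^sup>2)) (utt t x) + cscale (- complex_of_real (\<phi> t * \<phi>' t)) (ut t x)"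
      unfolding fsmul_def Hut by (simp add: cscale_def vec_eq_iff algebra_simps power2_eq_square)
    finally show ?thesis .
  qed
  have utt_eq: "utt t x = cscale (- 1 / complex_of_real ((\<phi> t)\<^sup>2)) (L (u t) x) + cscale (- complex_of_real (\<phi>' t / \<phi> t)) (ut t x)"
    if x: "x \<in> D" for t x
  proof (rule vec_eq_iff[THEN iffD2], rule allI)
    fix k
    have hk: "L (u t) x $ k = - (complex_of_real (\<phi> t) * complex_of_real (\<phi> t)) * utt t x $ k
        - complex_of_real (\<phi> t) * complex_of_real (\<phi>' t) * ut t x $ k"
      using Lrel[OF x, of t] by (simp add: cscale_def power2_eq_square)
    have c: "complex_of_real (\<phi> t) \<noteq> 0" using \<phi>ne[of t] by simp
    show "utt t x $ k = (cscale (- 1 / complex_of_real ((\<phi> t)\<^sup>2)) (L (u t) x) + cscale (- complex_of_real (\<phi>' t / \<phi> t)) (ut t x)) $ k"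
      unfolding cscale_def vec_lambda_beta vector_add_component hk using c
      by (simp add: field_simps power2_eq_square)
  qed
  have XD: "comm L (fmul \<psi>) f \<in> dom" if "f \<in> dom" for f
    unfolding comm_def using that by (intro dom_add[rule_format] dom_smul[rule_format] LD psiD)
  have P1: "(\<Theta> has_real_derivative (Re (hinner D h (L (fmul \<psi> (u t))) (ut t)) - Re (hinner D h (fmul \<psi> (L (u t))) (ut t)))) (at t)"
    for t
  proof -
    have \<Theta>eq: "\<Theta> = (\<lambda>s. (\<phi> s)\<^sup>2 * Re (hinner D h (fmul \<psi> (ut s)) (ut s)) +
       (2 * Re (hinner D h (fmul \<psi> (L (u s))) (u s)) - Re (hinner D h (L (fmul \<psi> (u s))) (u s))))"
    proof (rule ext)
      fix s
      have a: "hinner D h (fmul \<psi> (fsmul (complex_of_real (\<phi> s)) (ut s))) (fsmul (complex_of_real (\<phi> s)) (ut s))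
         = complex_of_real ((\<phi> s)\<^sup>2) * hinner D h (fmul \<psi> (ut s)) (ut s) + 0 * hinner D h (fmul \<psi> (ut s)) (ut s)
           + 0 * hinner D h (fmul \<psi> (ut s)) (ut s)"
        apply (rule hinner_lin3) subgoal by (auto simp: fmul_def fsmul_def power2_eq_square mult_ac) by (auto intro!: int psiD uD LD)
      have b: "hinner D h (fadd (fsmul 2 (fmul \<psi> (L (u s)))) (fsmul (-1) (L (fmul \<psi> (u s))))) (u s)
         = 2 * hinner D h (fmul \<psi> (L (u s))) (u s) + (-1) * hinner D h (L (fmul \<psi> (u s))) (u s) + 0 * hinner D h (u s) (u s)"
        apply (rule hinner_lin3) subgoal by (auto simp: fadd_def fsmul_def) by (auto intro!: int psiD uD LD)
      show "\<Theta> s = (\<phi> s)\<^sup>2 * Re (hinner D h (fmul \<psi> (ut s)) (ut s)) +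
       (2 * Re (hinner D h (fmul \<psi> (L (u s))) (u s)) - Re (hinner D h (L (fmul \<psi> (u s))) (u s)))"
        unfolding \<Theta>_def a b by simp
    qed
    have dA: "((\<lambda>s. Re (hinner D h (fmul \<psi> (ut s)) (ut s))) has_real_derivative
        (Re (hinner D h (fmul \<psi> (utt t)) (ut t)) + Re (hinner D h (fmul \<psi> (ut t)) (utt t)))) (at t)"
      using hinner_deriv_Re[OF sm \<psi>ut_dec ut_dec] by simp
    have dC: "((\<lambda>s. Re (hinner D h (fmul \<psi> (L (u s))) (u s))) has_real_derivative
        (Re (hinner D h (fmul \<psi> (L (ut t))) (u t)) + Re (hinner D h (fmul \<psi> (L (u t))) (ut t)))) (at t)"
      using hinner_deriv_Re[OF sm \<psi>Lu_dec u_dec] by simp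
    have dE: "((\<lambda>s. Re (hinner D h (L (fmul \<psi> (u s))) (u s))) has_real_derivative
        (Re (hinner D h (L (fmul \<psi> (ut t))) (u t)) + Re (hinner D h (L (fmul \<psi> (u t))) (ut t)))) (at t)"
      using hinner_deriv_Re[OF sm L\<psi>u_dec u_dec] by simp
    have dp: "((\<lambda>s. (\<phi> s)\<^sup>2) has_real_derivative (2 * \<phi> t * \<phi>' t)) (at t)"
      using DERIV_power[OF \<phi>_deriv[rule_format, of t], of 2] by (simp add: mult_ac)
    have d0: "(\<Theta> has_real_derivative
       (2 * \<phi> t * \<phi>' t * Re (hinner D h (fmul \<psi> (ut t)) (ut t))
        + (\<phi> t)\<^sup>2 * (Re (hinner D h (fmul \<psi> (utt t)) (ut t)) + Re (hinner D h (fmul \<psi> (ut t)) (utt t)))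
        + (2 * (Re (hinner D h (fmul \<psi> (L (ut t))) (u t)) + Re (hinner D h (fmul \<psi> (L (u t))) (ut t)))
          - (Re (hinner D h (L (fmul \<psi> (ut t))) (u t)) + Re (hinner D h (L (fmul \<psi> (u t))) (ut t)))))) (at t)"
      unfolding \<Theta>eq by (rule DERIV_cong[OF DERIV_add[OF DERIV_mult[OF dp dA] DERIV_diff[OF DERIV_cmult[OF dC] dE]]]) (simp add: algebra_simps)
    let ?A = "hinner D h (fmul \<psi> (ut t)) (ut t)"
    let ?K = "hinner D h (fmul \<psi> (ut t)) (L (u t))"
    let ?E2 = "hinner D h (L (fmul \<psi> (u t))) (ut t)"
    let ?C2 = "hinner D h (fmul \<psi> (L (u t))) (ut t)"
    have F1: "hinner D h (fmul \<psi> (utt t)) (ut t) = cnj (hinner D h (fmul \<psi> (ut t)) (utt t))"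
      by (rule hinner_cnj) (simp add: fmul_def)
    have F2: "hinner D h (fmul \<psi> (ut t)) (utt t) = complex_of_real (- 1 / (\<phi> t)\<^sup>2) * ?K
       + complex_of_real (- \<phi>' t / \<phi> t) * ?A + 0 * ?A"
      apply (rule hinner_lin3) subgoal by (auto simp: fmul_def utt_eq) by (auto intro!: int psiD uD LD)
    have F3: "?C2 = cnj ?K" by (rule hinner_cnj) (simp add: fmul_def)
    have F4a: "hinner D h (fmul \<psi> (L (ut t))) (u t) = 1 * hinner D h (L (ut t)) (fmul \<psi> (u t))
        + 0 * ?A + 0 * ?A"
      apply (rule hinner_lin3) subgoal by (auto simp: fmul_def) by (auto intro!: int psiD uD LD)
    have F4b: "hinner D h (L (ut t)) (fmul \<psi> (u t)) = hinner D h (ut t) (L (fmul \<psi> (u t)))"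
      using L_symm uD psiD by blast
    have F4c: "hinner D h (ut t) (L (fmul \<psi> (u t))) = cnj ?E2" by (rule hinner_cnj) simp
    have F5: "hinner D h (L (fmul \<psi> (ut t))) (u t) = ?K"
      using L_symm uD psiD by blast
    have r1: "Re (hinner D h (fmul \<psi> (utt t)) (ut t)) = Re (hinner D h (fmul \<psi> (ut t)) (utt t))"
      using F1 by simp
    have r2: "(\<phi> t)\<^sup>2 * Re (hinner D h (fmul \<psi> (ut t)) (utt t)) = - Re ?K - \<phi> t * \<phi>' t * Re ?A"
    proof -
      have "complex_of_real ((\<phi> t)\<^sup>2) * hinner D h (fmul \<psi> (ut t)) (utt t) = - ?K - complex_of_real (\<phi> t * \<phi>' t) * ?A"
        using F2 \<phi>ne[of t] by (simp add: field_simps power2_eq_square) (simp add: eq_neg_iff_add_eq_0 add_ac)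
      from arg_cong[OF this, of Re] show ?thesis by simp
    qed
    have r3: "Re ?C2 = Re ?K" using F3 by simp
    have r4: "Re (hinner D h (fmul \<psi> (L (ut t))) (u t)) = Re ?E2" using F4a F4b F4c by simp
    have r5: "Re (hinner D h (L (fmul \<psi> (ut t))) (u t)) = Re ?K" using F5 by simp
    show ?thesis
      apply (rule DERIV_cong[OF d0])
      using r1 r2 r3 r4 r5 by (simp add: algebra_simps)
  qed
  have part1: "\<phi> t * (Re (hinner D h (L (fmul \<psi> (u t))) (ut t)) - Re (hinner D h (fmul \<psi> (L (u t))) (ut t)))
      = Re (hinner D h (comm L (fmul \<psi>) (u t)) (fsmul (complex_of_real (\<phi> t)) (ut t)))" for t
  proof -
    have "hinner D h (comm L (fmul \<psi>) (u t)) (fsmul (complex_of_real (\<phi> t)) (ut t))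
       = complex_of_real (\<phi> t) * hinner D h (L (fmul \<psi> (u t))) (ut t)
         + complex_of_real (- \<phi> t) * hinner D h (fmul \<psi> (L (u t))) (ut t)
         + 0 * hinner D h (fmul \<psi> (L (u t))) (ut t)"
      apply (rule hinner_lin3) subgoal by (auto simp: comm_def fadd_def fsmul_def algebra_simps)
      by (auto intro!: int psiD uD LD)
    from arg_cong[OF this, of Re] show ?thesis by (simp add: algebra_simps)
  qed
  have dTh: "deriv \<Theta> s = Re (hinner D h (L (fmul \<psi> (u s))) (ut s)) - Re (hinner D h (fmul \<psi> (L (u s))) (ut s))" for s
    by (rule DERIV_imp_deriv[OF P1])
  have part2: "\<exists>d. ((\<lambda>s. \<phi> s * deriv \<Theta> s) has_real_derivative d) (at t) \<and>
           complex_of_real (\<phi> t * d) = - (1/2) * hinner D h (comm L (comm L (fmul \<psi>)) (u t)) (u t)" for t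
  proof -
    let ?E2 = "hinner D h (L (fmul \<psi> (u t))) (ut t)"
    let ?C2 = "hinner D h (fmul \<psi> (L (u t))) (ut t)"
    let ?W = "hinner D h (L (fmul \<psi> (u t))) (L (u t))"
    let ?Z = "hinner D h (fmul \<psi> (L (u t))) (L (u t))"
    let ?M = "hinner D h (fmul \<psi> (ut t)) (L (ut t))"
    have dE2: "((\<lambda>s. Re (hinner D h (L (fmul \<psi> (u s))) (ut s))) has_real_derivative
        (Re (hinner D h (L (fmul \<psi> (ut t))) (ut t)) + Re (hinner D h (L (fmul \<psi> (u t))) (utt t)))) (at t)"
      using hinner_deriv_Re[OF sm L\<psi>u_dec ut_dec] by simp
    have dC2: "((\<lambda>s. Re (hinner D h (fmul \<psi> (L (u s))) (ut s))) has_real_derivative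
        (Re (hinner D h (fmul \<psi> (L (ut t))) (ut t)) + Re (hinner D h (fmul \<psi> (L (u t))) (utt t)))) (at t)"
      using hinner_deriv_Re[OF sm \<psi>Lu_dec ut_dec] by simp
    have feq: "(\<lambda>s. \<phi> s * deriv \<Theta> s) = (\<lambda>s. \<phi> s * (Re (hinner D h (L (fmul \<psi> (u s))) (ut s)) - Re (hinner D h (fmul \<psi> (L (u s))) (ut s))))"
      by (simp add: dTh)
    define d where "d = \<phi>' t * (Re ?E2 - Re ?C2) + \<phi> t * ((Re (hinner D h (L (fmul \<psi> (ut t))) (ut t)) + Re (hinner D h (L (fmul \<psi> (u t))) (utt t)))
        - (Re (hinner D h (fmul \<psi> (L (ut t))) (ut t)) + Re (hinner D h (fmul \<psi> (L (u t))) (utt t))))"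
    have D: "((\<lambda>s. \<phi> s * deriv \<Theta> s) has_real_derivative d) (at t)"
      unfolding feq d_def
      by (rule DERIV_cong[OF DERIV_mult[OF \<phi>_deriv[rule_format] DERIV_diff[OF dE2 dC2]]]) (simp add: algebra_simps)
    have G1: "hinner D h (L (fmul \<psi> (ut t))) (ut t) = ?M" using L_symm uD psiD by blast
    have G2: "hinner D h (fmul \<psi> (L (ut t))) (ut t) = cnj ?M" by (rule hinner_cnj) (simp add: fmul_def)
    have G3: "hinner D h (L (fmul \<psi> (u t))) (utt t) = complex_of_real (- 1 / (\<phi> t)\<^sup>2) * ?W
       + complex_of_real (- \<phi>' t / \<phi> t) * ?E2 + 0 * ?E2"
      apply (rule hinner_lin3) subgoal by (auto simp: utt_eq) by (auto intro!: int psiD uD LD)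
    have G4: "hinner D h (fmul \<psi> (L (u t))) (utt t) = complex_of_real (- 1 / (\<phi> t)\<^sup>2) * ?Z
       + complex_of_real (- \<phi>' t / \<phi> t) * ?C2 + 0 * ?C2"
      apply (rule hinner_lin3) subgoal by (auto simp: utt_eq) by (auto intro!: int psiD uD LD)
    have s1: "(\<phi> t)\<^sup>2 * Re (hinner D h (L (fmul \<psi> (u t))) (utt t)) = - Re ?W - \<phi> t * \<phi>' t * Re ?E2"
    proof -
      have "complex_of_real ((\<phi> t)\<^sup>2) * hinner D h (L (fmul \<psi> (u t))) (utt t) = - ?W - complex_of_real (\<phi> t * \<phi>' t) * ?E2"
        using G3 \<phi>ne[of t] by (simp add: field_simps power2_eq_square) (simp add: eq_neg_iff_add_eq_0 add_ac)
      from arg_cong[OF this, of Re] show ?thesis by simp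
    qed
    have s2: "(\<phi> t)\<^sup>2 * Re (hinner D h (fmul \<psi> (L (u t))) (utt t)) = - Re ?Z - \<phi> t * \<phi>' t * Re ?C2"
    proof -
      have "complex_of_real ((\<phi> t)\<^sup>2) * hinner D h (fmul \<psi> (L (u t))) (utt t) = - ?Z - complex_of_real (\<phi> t * \<phi>' t) * ?C2"
        using G4 \<phi>ne[of t] by (simp add: field_simps power2_eq_square) (simp add: eq_neg_iff_add_eq_0 add_ac)
      from arg_cong[OF this, of Re] show ?thesis by simp
    qed
    have phid: "\<phi> t * d = Re ?Z - Re ?W"
      unfolding d_def using G1 G2 s1 s2 by (simp add: algebra_simps power2_eq_square)
    define X where "X = comm L (fmul \<psi>) (u t)"
    have H1: "hinner D h (comm L (comm L (fmul \<psi>)) (u t)) (u t) = 1 * hinner D h (L X) (u t)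
        + (-1) * hinner D h (L (fmul \<psi> (L (u t)))) (u t) + 1 * hinner D h (fmul \<psi> (L (L (u t)))) (u t)"
      apply (rule hinner_lin3) subgoal by (auto simp: X_def comm_def fadd_def fsmul_def algebra_simps)
      by (auto intro!: int psiD uD LD XD simp: X_def)
    have H2: "hinner D h (L X) (u t) = hinner D h X (L (u t))" using L_symm uD XD unfolding X_def by blast
    have H3: "hinner D h X (L (u t)) = 1 * ?W + (-1) * ?Z + 0 * ?Z"
      apply (rule hinner_lin3) subgoal by (auto simp: X_def comm_def fadd_def fsmul_def algebra_simps)
      by (auto intro!: int psiD uD LD)
    have H4: "hinner D h (L (fmul \<psi> (L (u t)))) (u t) = ?Z" using L_symm uD psiD LD by blast
    have H5a: "hinner D h (fmul \<psi> (L (L (u t)))) (u t) = 1 * hinner D h (L (L (u t))) (fmul \<psi> (u t)) + 0 * ?Z + 0 * ?Z"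
      apply (rule hinner_lin3) subgoal by (auto simp: fmul_def)
      by (auto intro!: int psiD uD LD)
    have H5b: "hinner D h (L (L (u t))) (fmul \<psi> (u t)) = hinner D h (L (u t)) (L (fmul \<psi> (u t)))"
      using L_symm uD psiD LD by blast
    have H5c: "hinner D h (L (u t)) (L (fmul \<psi> (u t))) = cnj ?W" by (rule hinner_cnj) simp
    have H6: "?Z = cnj ?Z" by (rule hinner_cnj) (simp add: fmul_def)
    have ImZ: "Im ?Z = 0" using arg_cong[OF H6, of Im] by simp
    have tot: "hinner D h (comm L (comm L (fmul \<psi>)) (u t)) (u t) = ?W - 2 * ?Z + cnj ?W"
      using H1 H2 H3 H4 H5a H5b H5c by simp
    have "complex_of_real (\<phi> t * d) = - (1/2) * hinner D h (comm L (comm L (fmul \<psi>)) (u t)) (u t)"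
      unfolding tot phid using ImZ by (simp add: complex_eq_iff field_simps)
    with D show ?thesis by blast
  qed
  show ?thesis using P1 part1 part2 by blast
qed

end
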